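(* For all integers $1\le r\le n$, $m(n,r)\le m(n,r-1)\,p(n,r)$.
   Context: $m(n,r)$ denotes the number of matroids of rank $r$ on the ground set $[n]=\{1,\dots,n\}$, and $p(n,r)$ the number of paving matroids of rank $r$ on $[n]$ (rank-$r$ matroids all of whose circuits have at least $r$ elements). *)

theory Defs
  imports Main
begin

definition matroid :: "'a set \<Rightarrow> 'a set set \<Rightarrow> bool" where
  "matroid E \<I> \<longleftrightarrow>
     (\<forall>X\<in>\<I>. X \<subseteq> E) \<and>
     {} \<in> \<I> \<and>
     (\<forall>X Y. X \<in> \<I> \<and> Y \<subseteq> X \<longrightarrow> Y \<in> \<I>) \<and>
     (\<forall>X Y. X \<in> \<I> \<and> Y \<in> \<I> \<and> card X < card Y \<longrightarrow>
        (\<exists>y\<in>Y - X. insert y X \<in> \<I>))"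

definition matroid_rank :: "'a set set \<Rightarrow> nat \<Rightarrow> bool" where
  "matroid_rank \<I> r \<longleftrightarrow> (\<exists>B\<in>\<I>. card B = r) \<and> (\<forall>X\<in>\<I>. card X \<le> r)"

definition circuit :: "'a set \<Rightarrow> 'a set set \<Rightarrow> 'a set \<Rightarrow> bool" where
  "circuit E \<I> C \<longleftrightarrow> C \<subseteq> E \<and> C \<notin> \<I> \<and> (\<forall>D. D \<subset> C \<longrightarrow> D \<in> \<I>)"

definition paving :: "'a set \<Rightarrow> 'a set set \<Rightarrow> nat \<Rightarrow> bool" where
  "paving E \<I> r \<longleftrightarrow> matroid E \<I> \<and> matroid_rank \<I> r \<and>
     (\<forall>C. circuit E \<I> C \<longrightarrow> card C \<ge> r)"

definition num_matroids :: "nat \<Rightarrow> nat \<Rightarrow> nat" where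
  "num_matroids n r = card {\<I>. matroid {1..n} \<I> \<and> matroid_rank \<I> r}"

definition num_paving :: "nat \<Rightarrow> nat \<Rightarrow> nat" where
  "num_paving n r = card {\<I>. paving {1..n} \<I> r}"

end

theory Submission
  imports Defs
begin

definition Hp :: "nat set \<Rightarrow> nat set set \<Rightarrow> nat set \<Rightarrow> nat set" where
  "Hp E I J = {x\<in>E. x \<in> J \<or> insert x J \<notin> I}"

fun Kp :: "nat set set \<Rightarrow> nat \<Rightarrow> nat set \<Rightarrow> nat \<Rightarrow> nat set" where
  "Kp I r H 0 = {}"
| "Kp I r H (Suc k) = Kp I r H k \<union>
     (if k \<in> H \<and> \<not>(\<exists>Z\<subseteq>Kp I r H k. Z \<in> I \<and> card Z + 2 \<le> r \<and> insert k Z \<notin> I) then {k} else {})"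

definition Blocks :: "nat set \<Rightarrow> nat set set \<Rightarrow> nat \<Rightarrow> nat \<Rightarrow> nat set set" where
  "Blocks E I r N = {Kp I r H N | H. (\<exists>J. J \<in> I \<and> card J + 1 = r \<and> H = Hp E I J) \<and> r \<le> card (Kp I r H N)}"

definition Pv :: "nat set \<Rightarrow> nat set set \<Rightarrow> nat \<Rightarrow> nat \<Rightarrow> nat set set" where
  "Pv E I r N = {X. X \<subseteq> E \<and> (card X < r \<or> (card X = r \<and> \<not>(\<exists>B\<in>Blocks E I r N. X \<subseteq> B)))}"

definition Tr :: "nat set set \<Rightarrow> nat \<Rightarrow> nat set set" where
  "Tr I r = {X\<in>I. card X < r}"

definition Dstep :: "nat set \<Rightarrow> nat set set \<Rightarrow> nat \<Rightarrow> nat set \<Rightarrow> nat set" where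
  "Dstep E I r S = S \<union> {e\<in>E. \<exists>Z\<subseteq>S. Z \<in> I \<and> card Z + 2 \<le> r \<and> insert e Z \<notin> I}"

lemma Kp_sub: "Kp I r H k \<subseteq> H \<inter> {..<k}"
  by (induction k) auto

lemma Kp_restr: "Kp I r H (e + d) \<inter> {..<e} = Kp I r H e"
proof (induction d)
  case 0
  then show ?case using Kp_sub[of I r H e] by auto
next
  case (Suc d)
  then show ?case by auto
qed

lemma Kp_restr': "e \<le> k \<Longrightarrow> Kp I r H k \<inter> {..<e} = Kp I r H e"
  using Kp_restr[of I r H e "k - e"] by simp

lemma Kp_mem: "e < k \<Longrightarrow> e \<in> Kp I r H k \<longleftrightarrow>
   e \<in> H \<and> \<not>(\<exists>Z\<subseteq>Kp I r H e. Z \<in> I \<and> card Z + 2 \<le> r \<and> insert e Z \<notin> I)"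
proof -
  assume "e < k"
  then have "Kp I r H k \<inter> {..<Suc e} = Kp I r H (Suc e)" by (intro Kp_restr') auto
  moreover have "e \<in> Kp I r H k \<longleftrightarrow> e \<in> Kp I r H k \<inter> {..<Suc e}" by simp
  ultimately have 1: "e \<in> Kp I r H k \<longleftrightarrow> e \<in> Kp I r H (Suc e)" by simp
  have "e \<notin> Kp I r H e" using Kp_sub[of I r H e] by auto
  then have "e \<in> Kp I r H (Suc e) \<longleftrightarrow>
     e \<in> H \<and> \<not>(\<exists>Z\<subseteq>Kp I r H e. Z \<in> I \<and> card Z + 2 \<le> r \<and> insert e Z \<notin> I)"
    by (simp only: Kp.simps Un_iff) (simp split: if_split)
  then show ?thesis using 1 by blast
qed

lemma Kp_a: "e < k \<Longrightarrow> e \<in> H \<Longrightarrow> e \<notin> Kp I r H k \<Longrightarrow>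
   \<exists>Z\<subseteq>Kp I r H k. Z \<in> I \<and> card Z + 2 \<le> r \<and> insert e Z \<notin> I"
proof -
  assume a: "e < k" "e \<in> H" "e \<notin> Kp I r H k"
  then obtain Z where "Z\<subseteq>Kp I r H e" "Z \<in> I \<and> card Z + 2 \<le> r \<and> insert e Z \<notin> I"
    using Kp_mem[OF a(1)] by blast
  moreover have "Kp I r H e \<subseteq> Kp I r H k" using Kp_restr'[of e k I r H] a(1) by auto
  ultimately show ?thesis by blast
qed

lemma Kp_b: "e < k \<Longrightarrow> e \<in> Kp I r H k \<Longrightarrow> Z \<subseteq> Kp I r H k \<Longrightarrow> (\<forall>z\<in>Z. z < e) \<Longrightarrow>
   \<not>(Z \<in> I \<and> card Z + 2 \<le> r \<and> insert e Z \<notin> I)"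
proof -
  assume a: "e < k" "e \<in> Kp I r H k" "Z \<subseteq> Kp I r H k" "\<forall>z\<in>Z. z < e"
  have "Z \<subseteq> Kp I r H k \<inter> {..<e}" using a by auto
  also have "\<dots> = Kp I r H e" using a(1) by (intro Kp_restr') auto
  finally show ?thesis using Kp_mem[OF a(1)] a(2) by blast
qed

locale Mt =
  fixes E :: "nat set" and I :: "nat set set" and r :: nat and N :: nat
  assumes mat: "matroid E I" and rk: "matroid_rank I r" and r1: "1 \<le> r" and EN: "E \<subseteq> {..<N}"
begin

lemma finE: "finite E" using EN finite_subset by blast
lemma indepE: "X \<in> I \<Longrightarrow> X \<subseteq> E" using mat unfolding matroid_def by blast
lemma fin: "X \<in> I \<Longrightarrow> finite X" using indepE finE finite_subset by blast
lemma emp: "{} \<in> I" using mat unfolding matroid_def by blast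
lemma down: "X \<in> I \<Longrightarrow> Y \<subseteq> X \<Longrightarrow> Y \<in> I" using mat unfolding matroid_def by blast
lemma exch: "X \<in> I \<Longrightarrow> Y \<in> I \<Longrightarrow> card X < card Y \<Longrightarrow> \<exists>y\<in>Y-X. insert y X \<in> I"
  using mat unfolding matroid_def by blast
lemma rk_le: "X \<in> I \<Longrightarrow> card X \<le> r" using rk unfolding matroid_rank_def by blast
lemma basis: "\<exists>B\<in>I. card B = r" using rk unfolding matroid_rank_def by blast

lemma aug: "Z \<in> I \<Longrightarrow> Y \<in> I \<Longrightarrow> card Z \<le> card Y \<Longrightarrow> \<exists>W\<in>I. Z \<subseteq> W \<and> W \<subseteq> Z \<union> Y \<and> card W = card Y"
proof (induction "card Y - card Z" arbitrary: Z)
  case 0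
  then show ?case by (intro bexI[of _ Z]) auto
next
  case (Suc k)
  then have "card Z < card Y" by auto
  then obtain y where y: "y \<in> Y - Z" "insert y Z \<in> I" using exch Suc by blast
  have c: "card (insert y Z) = card Z + 1" using y fin[OF Suc(3)] by auto
  have "k = card Y - card (insert y Z)" using Suc(2) c by auto
  then obtain W where "W\<in>I" "insert y Z \<subseteq> W" "W \<subseteq> insert y Z \<union> Y" "card W = card Y"
    using Suc(1)[of "insert y Z"] y Suc c by fastforce
  then show ?case using y by (intro bexI[of _ W]) auto
qed

lemma Hp_noindep: "J \<in> I \<Longrightarrow> card J + 1 = r \<Longrightarrow> Y \<subseteq> Hp E I J \<Longrightarrow> Y \<in> I \<Longrightarrow> card Y < r"
proof (rule ccontr)
  assume a: "J \<in> I" "card J + 1 = r" "Y \<subseteq> Hp E I J" "Y \<in> I" "\<not> card Y < r"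
  then have cY: "card Y = r" using rk_le by force
  obtain W where W: "W\<in>I" "J \<subseteq> W" "W \<subseteq> J \<union> Y" "card W = card Y"
    using aug[OF a(1) a(4)] a cY by auto
  have "W \<noteq> J" using W cY a(2) by auto
  then obtain w where w: "w \<in> W" "w \<notin> J" using W by blast
  then have "insert w J \<in> I" using W down by auto
  moreover have "w \<in> Y" using w W by auto
  ultimately show False using a(3) w unfolding Hp_def by auto
qed

lemma Hp_E: "Hp E I J \<subseteq> E" unfolding Hp_def by auto

lemma Hp_J: "J \<in> I \<Longrightarrow> J \<subseteq> Hp E I J" using indepE unfolding Hp_def by auto

lemma Hp_closed: "J \<in> I \<Longrightarrow> card J + 1 = r \<Longrightarrow> Z \<subseteq> Hp E I J \<Longrightarrow> Z \<in> I \<Longrightarrow> e \<in> E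
   \<Longrightarrow> insert e Z \<notin> I \<Longrightarrow> e \<in> Hp E I J"
proof (rule ccontr)
  assume a: "J \<in> I" "card J + 1 = r" "Z \<subseteq> Hp E I J" "Z \<in> I" "e \<in> E" "insert e Z \<notin> I" "e \<notin> Hp E I J"
  then have eJ: "e \<notin> J" "insert e J \<in> I" unfolding Hp_def by auto
  have c: "card (insert e J) = r" using eJ a(2) fin[OF a(1)] by auto
  obtain W where W: "W\<in>I" "Z \<subseteq> W" "W \<subseteq> Z \<union> insert e J" "card W = r"
    using aug[OF a(4) eJ(2)] c rk_le[OF a(4)] by auto
  show False
  proof (cases "e \<in> W")
    case True
    then have "insert e Z \<subseteq> W" using W by auto
    then show False using a(6) W down by blast
  next
    case False
    then have "W \<subseteq> Hp E I J" using W a(3) Hp_J[OF a(1)] by auto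
    then show False using Hp_noindep[OF a(1) a(2) _ W(1)] W by auto
  qed
qed

lemma Hp_eq: "J \<in> I \<Longrightarrow> card J + 1 = r \<Longrightarrow> K \<in> I \<Longrightarrow> card K + 1 = r \<Longrightarrow> K \<subseteq> Hp E I J
  \<Longrightarrow> Hp E I K = Hp E I J"
proof
  assume a: "J \<in> I" "card J + 1 = r" "K \<in> I" "card K + 1 = r" "K \<subseteq> Hp E I J"
  show "Hp E I K \<subseteq> Hp E I J"
  proof
    fix x assume x: "x \<in> Hp E I K"
    show "x \<in> Hp E I J"
    proof (cases "x \<in> K")
      case True then show ?thesis using a by auto
    next
      case False
      then have "insert x K \<notin> I" "x \<in> E" using x unfolding Hp_def by auto
      then show ?thesis using Hp_closed[OF a(1) a(2) a(5) a(3)] by auto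
    qed
  qed
  show "Hp E I J \<subseteq> Hp E I K"
  proof
    fix x assume x: "x \<in> Hp E I J"
    have "x \<in> K \<or> insert x K \<notin> I"
    proof (rule ccontr)
      assume "\<not> (x \<in> K \<or> insert x K \<notin> I)"
      then have xK: "x \<notin> K" "insert x K \<in> I" by auto
      have sub: "insert x K \<subseteq> Hp E I J" using x a by auto
      have "card (insert x K) = r" using fin[OF a(3)] xK(1) a(4) by simp
      then show False using Hp_noindep[OF a(1) a(2) sub xK(2)] by simp
    qed
    then show "x \<in> Hp E I K" using x unfolding Hp_def by auto
  qed
qed

lemma cover: "A \<subseteq> E \<Longrightarrow> (\<forall>Y\<subseteq>A. Y \<in> I \<longrightarrow> card Y < r) \<Longrightarrow> \<exists>J\<in>I. card J + 1 = r \<and> A \<subseteq> Hp E I J"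
proof -
  assume A: "A \<subseteq> E" "\<forall>Y\<subseteq>A. Y \<in> I \<longrightarrow> card Y < r"
  have bnd: "\<forall>Y. Y \<subseteq> A \<and> Y \<in> I \<longrightarrow> card Y < Suc r" using rk_le by (simp add: le_imp_less_Suc)
  obtain K where K: "K \<subseteq> A \<and> K \<in> I" "\<forall>Y. Y \<subseteq> A \<and> Y \<in> I \<longrightarrow> card Y \<le> card K"
    using ex_has_greatest_nat[of "\<lambda>Y. Y \<subseteq> A \<and> Y \<in> I" "{}" card "Suc r", OF _ bnd] emp by blast
  have "card K < r" using A(2) K(1) by blast
  then have cK: "card K + 1 \<le> r" by simp
  obtain B0 where B0: "B0 \<in> I" "card B0 = r" using basis by blast
  obtain B' where B': "B' \<subseteq> B0" "card B' = r - 1" using obtain_subset_with_card_n[of "r - 1" B0] B0 by auto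
  have B'I: "B' \<in> I" using B' B0 down by auto
  obtain J where J: "J\<in>I" "K \<subseteq> J" "J \<subseteq> K \<union> B'" "card J = r - 1"
  proof -
    have "card K \<le> card B'" using B' cK by simp
    then show ?thesis using aug[of K B'] K B'I B' that by auto
  qed
  have "A \<subseteq> Hp E I J"
  proof
    fix a assume a: "a \<in> A"
    show "a \<in> Hp E I J"
    proof (cases "a \<in> J")
      case True then show ?thesis using Hp_J J by auto
    next
      case False
      then have "a \<notin> K" using J by auto
      then have "card (insert a K) > card K" using fin K by auto
      moreover have "insert a K \<subseteq> A" using K a by auto
      ultimately have "insert a K \<notin> I" using K(2) by (meson not_le)
      moreover have "insert a K \<subseteq> insert a J" using J by auto
      ultimately have "insert a J \<notin> I" using down[of "insert a J" "insert a K"] by blast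
      then show ?thesis using a A unfolding Hp_def by auto
    qed
  qed
  then show ?thesis using J r1 by (intro bexI[of _ J]) auto
qed

lemma Dstep_sub: "J \<in> I \<Longrightarrow> card J + 1 = r \<Longrightarrow> S \<subseteq> Hp E I J \<Longrightarrow> Dstep E I r S \<subseteq> Hp E I J"
  unfolding Dstep_def using Hp_closed by blast

lemma Kp_H: "Kp I r H N \<subseteq> H" using Kp_sub by blast

lemma blocks_sub: "B \<in> Blocks E I r N \<Longrightarrow> \<exists>J\<in>I. card J + 1 = r \<and> B \<subseteq> Hp E I J"
  unfolding Blocks_def using Kp_H by blast

lemma blocks_pair:
  assumes B1: "B1 \<in> Blocks E I r N" and B2: "B2 \<in> Blocks E I r N" and ne: "B1 \<noteq> B2"
    and W: "W \<subseteq> B1" "W \<subseteq> B2" "card W + 1 = r"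
  shows False
proof -
  obtain J1 where J1: "J1 \<in> I" "card J1 + 1 = r" "B1 = Kp I r (Hp E I J1) N"
    using B1 unfolding Blocks_def by blast
  obtain J2 where J2: "J2 \<in> I" "card J2 + 1 = r" "B2 = Kp I r (Hp E I J2) N"
    using B2 unfolding Blocks_def by blast
  have W1: "W \<subseteq> Hp E I J1" using W J1 Kp_H by blast
  have W2: "W \<subseteq> Hp E I J2" using W J2 Kp_H by blast
  have WE: "W \<subseteq> E" using W1 Hp_E by blast
  show False
  proof (cases "W \<in> I")
    case True
    have "Hp E I W = Hp E I J1" using Hp_eq[OF J1(1) J1(2) True W(3) W1] .
    moreover have "Hp E I W = Hp E I J2" using Hp_eq[OF J2(1) J2(2) True W(3) W2] .
    ultimately have "Hp E I J1 = Hp E I J2" by simp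
    then show False using ne J1(3) J2(3) by simp
  next
    case False
    obtain C where C: "C \<subseteq> W \<and> C \<notin> I" "\<forall>C'. C' \<subseteq> W \<and> C' \<notin> I \<longrightarrow> card C \<le> card C'"
      using ex_has_least_nat[of "\<lambda>C. C \<subseteq> W \<and> C \<notin> I" W card] False by blast
    have fW: "finite W" using finite_subset[OF WE finE] .
    have fC: "finite C" using C finite_subset[OF _ fW] by blast
    have Cne: "C \<noteq> {}" using C emp by auto
    define e where "e = Max C"
    have eC: "e \<in> C" unfolding e_def using Max_in[OF fC Cne] .
    define Z where "Z = C - {e}"
    have "card Z = card C - 1" unfolding Z_def using card_Diff_singleton[OF eC] .
    moreover have "card C > 0" using fC Cne card_gt_0_iff by blast
    ultimately have cZ: "card Z + 1 = card C" by simp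
    have ZI: "Z \<in> I"
    proof (rule ccontr)
      assume "Z \<notin> I"
      moreover have "Z \<subseteq> W" using C Z_def by auto
      ultimately have "card C \<le> card Z" using C(2) by blast
      then show False using cZ by auto
    qed
    have "card C \<le> card W" using C card_mono[OF fW] by blast
    then have cZ2: "card Z + 2 \<le> r" using cZ W(3) by auto
    have ins: "insert e Z = C" using eC Z_def by auto
    have lt: "\<forall>z\<in>Z. z < e"
    proof
      fix z assume "z \<in> Z"
      then have "z \<in> C" "z \<noteq> e" unfolding Z_def by auto
      then show "z < e" using Max_ge[OF fC, of z] e_def by simp
    qed
    have eN: "e < N" using eC C WE EN by auto
    have eB: "e \<in> Kp I r (Hp E I J1) N" using eC C W J1 by blast
    have ZB: "Z \<subseteq> Kp I r (Hp E I J1) N" using Z_def C W J1 by blast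
    have "insert e Z \<notin> I" using ins C(1) by simp
    then show False using Kp_b[OF eN eB ZB lt] ZI cZ2 by blast
  qed
qed

abbreviation "P \<equiv> Pv E I r N"

lemma P_matroid: "matroid E P"
  unfolding matroid_def
proof (intro conjI allI impI ballI)
  show "\<And>X. X \<in> P \<Longrightarrow> X \<subseteq> E" unfolding Pv_def by auto
  show "{} \<in> P" unfolding Pv_def using r1 by auto
next
  fix X Y assume a: "X \<in> P \<and> Y \<subseteq> X"
  then have XE: "X \<subseteq> E" unfolding Pv_def by simp
  then have XE: "X \<subseteq> E" "finite X" using finite_subset[OF _ finE] by auto
  have cX: "card X \<le> r" using a unfolding Pv_def by auto
  show "Y \<in> P"
  proof (cases "card Y < r")
    case True
    have "Y \<subseteq> E" using a XE by blast
    then show ?thesis using True unfolding Pv_def by simp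
  next
    case False
    have "card Y \<le> card X" using card_mono[OF XE(2)] a by blast
    then have "card Y = card X" using False cX by linarith
    then have "Y = X" using card_subset_eq[OF XE(2)] a by auto
    then show ?thesis using a by auto
  qed
next
  fix X Y assume a: "X \<in> P \<and> Y \<in> P \<and> card X < card Y"
  have XE0: "X \<subseteq> E" "Y \<subseteq> E" using a unfolding Pv_def by simp_all
  have XE: "X \<subseteq> E" "finite X" "Y \<subseteq> E" "finite Y"
    using XE0 finite_subset[OF _ finE] by auto
  have cY: "card Y \<le> r" using a unfolding Pv_def by auto
  have ex: "\<exists>y. y \<in> Y - X"
  proof (rule ccontr)
    assume "\<not> (\<exists>y. y \<in> Y - X)"
    then have "Y \<subseteq> X" by blast
    then have "card Y \<le> card X" by (rule card_mono[OF XE(2)])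
    then show False using a by simp
  qed
  show "\<exists>y\<in>Y - X. insert y X \<in> P"
  proof (cases "card X + 1 < r")
    case True
    then obtain y where y: "y \<in> Y - X" using ex by blast
    then have "card (insert y X) < r" using True XE by auto
    moreover have "insert y X \<subseteq> E" using y XE by auto
    ultimately have "insert y X \<in> P" unfolding Pv_def by simp
    then show ?thesis using y by blast
  next
    case False
    then have cX: "card X + 1 = r" "card Y = r" using a cY by auto
    then have Ynb: "\<not>(\<exists>B\<in>Blocks E I r N. Y \<subseteq> B)" using a unfolding Pv_def by auto
    show ?thesis
    proof (cases "\<exists>B\<in>Blocks E I r N. X \<subseteq> B")
      case True
      then obtain B where B: "B \<in> Blocks E I r N" "X \<subseteq> B" by blast
      then obtain y where y: "y \<in> Y" "y \<notin> B" using Ynb by blast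
      have yX: "y \<notin> X" using y B by auto
      have c: "card (insert y X) = r" using yX XE cX by auto
      have "\<not>(\<exists>B'\<in>Blocks E I r N. insert y X \<subseteq> B')"
      proof
        assume "\<exists>B'\<in>Blocks E I r N. insert y X \<subseteq> B'"
        then obtain B' where B': "B' \<in> Blocks E I r N" "insert y X \<subseteq> B'" by blast
        then have "B' = B" using blocks_pair[OF B(1) B'(1) _ B(2) _ cX(1)] by auto
        then show False using B' y by auto
      qed
      moreover have "insert y X \<subseteq> E" using y XE by auto
      ultimately have "insert y X \<in> P" using c unfolding Pv_def by simp
      then show ?thesis using y yX by blast
    next
      case False
      then obtain y where y: "y \<in> Y - X" using ex by blast
      have c: "card (insert y X) = r" using y XE cX by auto
      have "\<not>(\<exists>B'\<in>Blocks E I r N. insert y X \<subseteq> B')" using False by blast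
      moreover have "insert y X \<subseteq> E" using y XE by auto
      ultimately have "insert y X \<in> P" using c unfolding Pv_def by simp
      then show ?thesis using y by blast
    qed
  qed
qed

lemma P_rank: "matroid_rank P r"
  unfolding matroid_rank_def
proof
  obtain B0 where B0: "B0 \<in> I" "card B0 = r" using basis by blast
  have "\<not>(\<exists>B\<in>Blocks E I r N. B0 \<subseteq> B)"
  proof
    assume "\<exists>B\<in>Blocks E I r N. B0 \<subseteq> B"
    then obtain J where J: "J\<in>I" "card J + 1 = r" "B0 \<subseteq> Hp E I J" using blocks_sub by blast
    have "card B0 < r" using Hp_noindep[OF J B0(1)] .
    then show False using B0 by simp
  qed
  then show "\<exists>B\<in>P. card B = r" using B0 indepE unfolding Pv_def by auto
  show "\<forall>X\<in>P. card X \<le> r" unfolding Pv_def by auto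
qed

lemma P_paving: "paving E P r"
  unfolding paving_def
proof (intro conjI allI impI P_matroid P_rank)
  fix C assume "circuit E P C"
  then have "C \<subseteq> E" "C \<notin> P" unfolding circuit_def by auto
  then show "r \<le> card C" unfolding Pv_def by auto
qed

lemma T_matroid: "matroid E (Tr I r)"
  unfolding matroid_def Tr_def
proof (intro conjI allI impI ballI)
  show "\<And>X. X \<in> {X \<in> I. card X < r} \<Longrightarrow> X \<subseteq> E" using indepE by auto
  show "{} \<in> {X \<in> I. card X < r}" using emp r1 by auto
next
  fix X Y assume a: "X \<in> {X \<in> I. card X < r} \<and> Y \<subseteq> X"
  then have "Y \<in> I" "card Y \<le> card X" using down[of X Y] card_mono[OF fin[of X], of Y] by auto
  then show "Y \<in> {X \<in> I. card X < r}" using a by auto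
next
  fix X Y assume a: "X \<in> {X \<in> I. card X < r} \<and> Y \<in> {X \<in> I. card X < r} \<and> card X < card Y"
  then obtain y where "y \<in> Y - X" "insert y X \<in> I" using exch by blast
  moreover have "card (insert y X) < r" using a fin calculation by auto
  ultimately show "\<exists>y\<in>Y - X. insert y X \<in> {X \<in> I. card X < r}" by auto
qed

lemma T_rank: "matroid_rank (Tr I r) (r - 1)"
  unfolding matroid_rank_def Tr_def
proof
  obtain B0 where B0: "B0 \<in> I" "card B0 = r" using basis by blast
  obtain B' where B': "B' \<subseteq> B0" "card B' = r - 1" using obtain_subset_with_card_n[of "r - 1" B0] B0 by auto
  then show "\<exists>B\<in>{X \<in> I. card X < r}. card B = r - 1" using B0 down r1 by (intro bexI[of _ B']) auto
  show "\<forall>X\<in>{X \<in> I. card X < r}. card X \<le> r - 1" by auto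
qed

lemma charac:
  assumes XE: "X \<subseteq> E" and cX: "card X = r"
  shows "X \<in> I \<longleftrightarrow> (\<exists>x\<in>X. X - {x} \<in> I) \<and>
    \<not>(\<exists>S. S \<subseteq> E \<and> (\<forall>Y\<subseteq>S. card Y = r \<longrightarrow> Y \<notin> P) \<and> X \<subseteq> Dstep E I r S)"
proof
  assume XI: "X \<in> I"
  have "X \<noteq> {}" using cX r1 by auto
  then obtain x where "x \<in> X" by blast
  then have "\<exists>x\<in>X. X - {x} \<in> I" using down[OF XI, of "X - {x}"] by blast
  moreover have "\<not>(\<exists>S. S \<subseteq> E \<and> (\<forall>Y\<subseteq>S. card Y = r \<longrightarrow> Y \<notin> P) \<and> X \<subseteq> Dstep E I r S)"
  proof
    assume "\<exists>S. S \<subseteq> E \<and> (\<forall>Y\<subseteq>S. card Y = r \<longrightarrow> Y \<notin> P) \<and> X \<subseteq> Dstep E I r S"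
    then obtain S where S: "S \<subseteq> E" "\<forall>Y\<subseteq>S. card Y = r \<longrightarrow> Y \<notin> P" "X \<subseteq> Dstep E I r S" by blast
    have "\<forall>Y\<subseteq>S. Y \<in> I \<longrightarrow> card Y < r"
    proof (intro allI impI)
      fix Y assume Y: "Y \<subseteq> S" "Y \<in> I"
      show "card Y < r"
      proof (rule ccontr)
        assume "\<not> card Y < r"
        then have cY: "card Y = r" using rk_le Y by force
        then have "Y \<notin> P" using S Y by auto
        moreover have YE: "Y \<subseteq> E" using Y S by blast
        ultimately have "\<exists>B\<in>Blocks E I r N. Y \<subseteq> B" using cY unfolding Pv_def by simp
        then obtain B where "B\<in>Blocks E I r N" "Y \<subseteq> B" by blast
        then obtain J where J: "J\<in>I" "card J + 1 = r" "Y \<subseteq> Hp E I J" using blocks_sub by blast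
        have "card Y < r" using Hp_noindep[OF J Y(2)] .
        then show False using cY by simp
      qed
    qed
    then obtain J where J: "J\<in>I" "card J + 1 = r" "S \<subseteq> Hp E I J" using cover[OF S(1)] by blast
    have "Dstep E I r S \<subseteq> Hp E I J" using Dstep_sub[OF J] .
    then have "X \<subseteq> Hp E I J" using S(3) by blast
    have "card X < r" using Hp_noindep[OF J(1) J(2) \<open>X \<subseteq> Hp E I J\<close> XI] .
    then show False using cX by simp
  qed
  ultimately show "(\<exists>x\<in>X. X - {x} \<in> I) \<and>
    \<not>(\<exists>S. S \<subseteq> E \<and> (\<forall>Y\<subseteq>S. card Y = r \<longrightarrow> Y \<notin> P) \<and> X \<subseteq> Dstep E I r S)" by blast
next
  assume a: "(\<exists>x\<in>X. X - {x} \<in> I) \<and>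
    \<not>(\<exists>S. S \<subseteq> E \<and> (\<forall>Y\<subseteq>S. card Y = r \<longrightarrow> Y \<notin> P) \<and> X \<subseteq> Dstep E I r S)"
  show "X \<in> I"
  proof (rule ccontr)
    assume XnI: "X \<notin> I"
    obtain x where x: "x \<in> X" "X - {x} \<in> I" using a by blast
    define K where "K = X - {x}"
    have fX: "finite X" using finite_subset[OF XE finE] .
    have cK: "card K + 1 = r" using K_def x fX cX r1 by (simp add: card_Diff_singleton)
    have ins: "insert x K = X" using K_def x by auto
    define H where "H = Hp E I K"
    have XH: "X \<subseteq> H" unfolding H_def Hp_def using XE ins XnI K_def by auto
    define S where "S = Kp I r H N"
    have SH: "S \<subseteq> H" using S_def Kp_H by auto
    have HE: "H \<subseteq> E" using H_def Hp_E by auto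
    have cert: "\<forall>Y\<subseteq>S. card Y = r \<longrightarrow> Y \<notin> P"
    proof (intro allI impI)
      fix Y assume Y: "Y \<subseteq> S" "card Y = r"
      have fS: "finite S" using finite_subset[OF _ finE] SH HE by blast
      have "r \<le> card S" using card_mono[OF fS Y(1)] Y by auto
      then have "S \<in> Blocks E I r N" unfolding Blocks_def S_def H_def using x K_def cK by blast
      then show "Y \<notin> P" using Y unfolding Pv_def by auto
    qed
    have "H \<subseteq> Dstep E I r S"
    proof
      fix e assume e: "e \<in> H"
      show "e \<in> Dstep E I r S"
      proof (cases "e \<in> S")
        case True then show ?thesis unfolding Dstep_def by auto
      next
        case False
        have "e < N" using e HE EN by auto
        then obtain Z where "Z\<subseteq>S" "Z \<in> I \<and> card Z + 2 \<le> r \<and> insert e Z \<notin> I"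
          using Kp_a[of e N H I r] e False S_def by blast
        moreover have "e \<in> E" using e HE by blast
        ultimately show ?thesis unfolding Dstep_def by blast
      qed
    qed
    then have "X \<subseteq> Dstep E I r S" using XH by blast
    moreover have "S \<subseteq> E" using SH HE by blast
    ultimately have "\<exists>S. S \<subseteq> E \<and> (\<forall>Y\<subseteq>S. card Y = r \<longrightarrow> Y \<notin> P) \<and> X \<subseteq> Dstep E I r S"
      using cert by blast
    then show False using a by blast
  qed
qed

end

lemma Dstep_T: "Tr I1 r = Tr I2 r \<Longrightarrow> Dstep E I1 r S = Dstep E I2 r S"
proof -
  assume T: "Tr I1 r = Tr I2 r"
  have small: "\<And>A. card A < r \<Longrightarrow> A \<in> I1 \<longleftrightarrow> A \<in> I2"
  proof -
    fix A :: "nat set" assume "card A < r"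
    then have "A \<in> I1 \<longleftrightarrow> A \<in> Tr I1 r" "A \<in> I2 \<longleftrightarrow> A \<in> Tr I2 r" unfolding Tr_def by auto
    then show "A \<in> I1 \<longleftrightarrow> A \<in> I2" using T by simp
  qed
  have ci: "\<And>(Z::nat set) e. card Z + 2 \<le> r \<Longrightarrow> card (insert e Z) < r"
  proof -
    fix Z :: "nat set" and e assume a: "card Z + 2 \<le> r"
    show "card (insert e Z) < r"
    proof (cases "finite Z")
      case True
      then have "card (insert e Z) \<le> Suc (card Z)" by (simp add: card_insert_if)
      then show ?thesis using a by simp
    next
      case False then show ?thesis using a by simp
    qed
  qed
  have key: "\<And>Z e. (Z \<in> I1 \<and> card Z + 2 \<le> r \<and> insert e Z \<notin> I1) \<longleftrightarrow> (Z \<in> I2 \<and> card Z + 2 \<le> r \<and> insert e Z \<notin> I2)"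
  proof -
    fix Z :: "nat set" and e
    show "(Z \<in> I1 \<and> card Z + 2 \<le> r \<and> insert e Z \<notin> I1) \<longleftrightarrow> (Z \<in> I2 \<and> card Z + 2 \<le> r \<and> insert e Z \<notin> I2)"
    proof (cases "card Z + 2 \<le> r")
      case True
      then have "card Z < r" by simp
      then show ?thesis using small ci[OF True] by blast
    next
      case False then show ?thesis by simp
    qed
  qed
  show ?thesis unfolding Dstep_def by (simp only: key)
qed

lemma inj_aux:
  assumes M1: "Mt E I1 r N" and M2: "Mt E I2 r N" and T: "Tr I1 r = Tr I2 r"
    and P: "Pv E I1 r N = Pv E I2 r N" and X: "X \<in> I1"
  shows "X \<in> I2"
proof -
  have XE: "X \<subseteq> E" using Mt.indepE[OF M1 X] .
  have cX: "card X \<le> r" using Mt.rk_le[OF M1 X] .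
  have fX: "finite X" using Mt.fin[OF M1 X] .
  have small: "\<And>A. card A < r \<Longrightarrow> A \<in> I1 \<longleftrightarrow> A \<in> I2"
  proof -
    fix A :: "nat set" assume "card A < r"
    then have "A \<in> I1 \<longleftrightarrow> A \<in> Tr I1 r" "A \<in> I2 \<longleftrightarrow> A \<in> Tr I2 r" unfolding Tr_def by auto
    then show "A \<in> I1 \<longleftrightarrow> A \<in> I2" using T by simp
  qed
  show ?thesis
  proof (cases "card X < r")
    case True then show ?thesis using small X by blast
  next
    case False
    then have cXr: "card X = r" using cX by simp
    have r1: "1 \<le> r" using M1 unfolding Mt_def by blast
    have R1: "(\<exists>x\<in>X. X - {x} \<in> I1) \<and>
      \<not>(\<exists>S. S \<subseteq> E \<and> (\<forall>Y\<subseteq>S. card Y = r \<longrightarrow> Y \<notin> Pv E I1 r N) \<and> X \<subseteq> Dstep E I1 r S)"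
      using Mt.charac[OF M1 XE cXr] X by blast
    have ex: "\<exists>x\<in>X. X - {x} \<in> I2"
    proof -
      obtain x where x: "x \<in> X" "X - {x} \<in> I1" using R1 by blast
      have "card (X - {x}) < r" using x(1) fX cXr r1 by (simp add: card_Diff_singleton)
      then show ?thesis using x small by blast
    qed
    have D: "\<And>S. Dstep E I1 r S = Dstep E I2 r S" using Dstep_T[OF T] .
    have nx: "\<not>(\<exists>S. S \<subseteq> E \<and> (\<forall>Y\<subseteq>S. card Y = r \<longrightarrow> Y \<notin> Pv E I2 r N) \<and> X \<subseteq> Dstep E I2 r S)"
      using R1 unfolding D P by blast
    show ?thesis using Mt.charac[OF M2 XE cXr] ex nx by blast
  qed
qed

theorem lemma4p4:
  fixes n r :: nat
  assumes "1 \<le> r" and "r \<le> n"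
  shows "num_matroids n r \<le> num_matroids n (r - 1) * num_paving n r"
proof -
  define E where "E = {1..n::nat}"
  define N where "N = Suc n"
  define A where "A = {I. matroid E I \<and> matroid_rank I r}"
  define B1 where "B1 = {I. matroid E I \<and> matroid_rank I (r - 1)}"
  define B2 where "B2 = {I. paving E I r}"
  define f where "f = (\<lambda>I. (Tr I r, Pv E I r N))"
  have EN: "E \<subseteq> {..<N}" unfolding E_def N_def by auto
  have loc: "\<And>I. I \<in> A \<Longrightarrow> Mt E I r N"
    unfolding A_def Mt_def using EN assms(1) by blast
  have sub: "f ` A \<subseteq> B1 \<times> B2"
  proof
    fix p assume "p \<in> f ` A"
    then obtain I where I: "I \<in> A" "p = f I" by blast
    have "Tr I r \<in> B1" unfolding B1_def using Mt.T_matroid[OF loc[OF I(1)]] Mt.T_rank[OF loc[OF I(1)]] by blast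
    moreover have "Pv E I r N \<in> B2" unfolding B2_def using Mt.P_paving[OF loc[OF I(1)]] by blast
    ultimately show "p \<in> B1 \<times> B2" using I unfolding f_def by simp
  qed
  have inj: "inj_on f A"
  proof (rule inj_onI)
    fix I1 I2 assume a: "I1 \<in> A" "I2 \<in> A" "f I1 = f I2"
    then have T: "Tr I1 r = Tr I2 r" and P: "Pv E I1 r N = Pv E I2 r N" unfolding f_def by auto
    show "I1 = I2"
    proof
      show "I1 \<subseteq> I2" using inj_aux[OF loc[OF a(1)] loc[OF a(2)] T P] by blast
      show "I2 \<subseteq> I1" using inj_aux[OF loc[OF a(2)] loc[OF a(1)] T[symmetric] P[symmetric]] by blast
    qed
  qed
  have fE: "finite E" unfolding E_def by simp
  have "B1 \<subseteq> Pow (Pow E)" unfolding B1_def matroid_def by blast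
  then have f1: "finite B1" using fE by (meson finite_Pow_iff finite_subset)
  have "B2 \<subseteq> Pow (Pow E)" unfolding B2_def paving_def matroid_def by blast
  then have f2: "finite B2" using fE by (meson finite_Pow_iff finite_subset)
  have "card A \<le> card (B1 \<times> B2)" using card_inj_on_le[OF inj sub] f1 f2 by simp
  also have "\<dots> = card B1 * card B2" by (rule card_cartesian_product)
  finally show ?thesis unfolding num_matroids_def num_paving_def A_def B1_def B2_def E_def .
qed

end
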